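(* Let $\mathbf v=(v_1,\dots,v_m)$ and $\mathbf k=(k_1,\dots,k_m)$ be $m$-tuples of positive integers with $k_i\le v_i$ for all $i$, and let $v_{\max}=\max_i v_i$ and $k_{\min}=\min_i k_i$. Suppose there is an index $i$ with $v_i=v_{\max}$ and $k_i=k_{\min}\ge2$. Then $C(\mathbf v,\mathbf k,2)=C(v_{\max},k_{\min},2)$.
   Context: Let $X_1,\dots,X_m$ be pairwise disjoint sets with $|X_i|=v_i$. A block is an $m$-tuple $(B_1,\dots,B_m)$ with $B_i\subseteq X_i$, $|B_i|=k_i$. An $m$-tuple of sets $(T_1,\dots,T_m)$ is $(\mathbf v,\mathbf k,2)$-admissible if $T_i\subseteq X_i$, $|T_i|\le k_i$ and $\sum|T_i|=2$; it is contained in a block if $T_i\subseteq B_i$ for all $i$. A ${\rm GC}(\mathbf v,\mathbf k,2)$ is a finite family (repetitions allowed) of blocks containing every admissible tuple in at least one block; $C(\mathbf v,\mathbf k,2)$ is the minimum number of blocks. For integers $v\ge k\ge2$, $C(v,k,2)$ is the ordinary covering number: the minimum number of $k$-subsets of a $v$-set such that every $2$-subset is contained in at least one of them. *)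

theory Defs
  imports Main
begin

text \<open>Ground sets are modelled concretely: X_i = {0..<v i} for i < m, regarded as
  pairwise disjoint (tagged by the index i).\<close>

definition is_block :: "nat \<Rightarrow> (nat \<Rightarrow> nat) \<Rightarrow> (nat \<Rightarrow> nat) \<Rightarrow> (nat \<Rightarrow> nat set) \<Rightarrow> bool" where
  "is_block m v k B \<longleftrightarrow>
     (\<forall>i<m. B i \<subseteq> {0..<v i} \<and> card (B i) = k i) \<and> (\<forall>i\<ge>m. B i = {})"

definition admissible2 :: "nat \<Rightarrow> (nat \<Rightarrow> nat) \<Rightarrow> (nat \<Rightarrow> nat) \<Rightarrow> (nat \<Rightarrow> nat set) \<Rightarrow> bool" where
  "admissible2 m v k T \<longleftrightarrow>
     (\<forall>i<m. T i \<subseteq> {0..<v i} \<and> card (T i) \<le> k i) \<and> (\<forall>i\<ge>m. T i = {})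
     \<and> (\<Sum>i<m. card (T i)) = 2"

definition contained_in :: "nat \<Rightarrow> (nat \<Rightarrow> nat set) \<Rightarrow> (nat \<Rightarrow> nat set) \<Rightarrow> bool" where
  "contained_in m T B \<longleftrightarrow> (\<forall>i<m. T i \<subseteq> B i)"

text \<open>A GC(v,k,2): a finite family (list, repetitions allowed) of blocks covering every
  admissible tuple.\<close>
definition is_GC :: "nat \<Rightarrow> (nat \<Rightarrow> nat) \<Rightarrow> (nat \<Rightarrow> nat) \<Rightarrow> (nat \<Rightarrow> nat set) list \<Rightarrow> bool" where
  "is_GC m v k F \<longleftrightarrow>
     (\<forall>B\<in>set F. is_block m v k B) \<and>
     (\<forall>T. admissible2 m v k T \<longrightarrow> (\<exists>B\<in>set F. contained_in m T B))"

definition GC_num :: "nat \<Rightarrow> (nat \<Rightarrow> nat) \<Rightarrow> (nat \<Rightarrow> nat) \<Rightarrow> nat" where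
  "GC_num m v k = (LEAST n. \<exists>F. length F = n \<and> is_GC m v k F)"

definition is_covering :: "nat \<Rightarrow> nat \<Rightarrow> nat set list \<Rightarrow> bool" where
  "is_covering v k F \<longleftrightarrow>
     (\<forall>B\<in>set F. B \<subseteq> {0..<v} \<and> card B = k) \<and>
     (\<forall>P. P \<subseteq> {0..<v} \<and> card P = 2 \<longrightarrow> (\<exists>B\<in>set F. P \<subseteq> B))"

definition cover_num :: "nat \<Rightarrow> nat \<Rightarrow> nat" where
  "cover_num v k = (LEAST n. \<exists>F. length F = n \<and> is_covering v k F)"

end

theory Submission
  imports Defs
begin

lemma lowerA:
  assumes GC: "is_GC m v k F" and j: "j < m" and "k j \<ge> 2"
  shows "is_covering (v j) (k j) (map (\<lambda>B. B j) F)"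
  unfolding is_covering_def
proof (intro conjI allI impI)
  show "\<forall>B\<in>set (map (\<lambda>B. B j) F). B \<subseteq> {0..<v j} \<and> card B = k j"
    using GC j unfolding is_GC_def is_block_def by auto
next
  fix P :: "nat set" assume P: "P \<subseteq> {0..<v j} \<and> card P = 2"
  define T where "T = (\<lambda>i. if i = j then P else ({}::nat set))"
  have s0: "(\<Sum>i<m. card (T i)) = (\<Sum>i<m. if i = j then card P else 0)"
    by (rule sum.cong) (auto simp: T_def)
  have s: "(\<Sum>i<m. card (T i)) = 2" unfolding s0 using j P by (simp add: sum.delta')
  have "admissible2 m v k T"
    unfolding admissible2_def using P j assms(3) s by (auto simp: T_def)
  then obtain B where "B \<in> set F" "contained_in m T B" using GC unfolding is_GC_def by blast
  then have "P \<subseteq> B j" using j unfolding contained_in_def T_def by (metis (full_types))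
  then show "\<exists>B\<in>set (map (\<lambda>B. B j) F). P \<subseteq> B"
    using \<open>B \<in> set F\<close> by auto
qed

lemma upperB:
  assumes C: "is_covering V K Cs" and K2: "K \<ge> 2"
    and le: "\<forall>i<m. K \<le> k i \<and> k i \<le> v i \<and> v i \<le> V"
  shows "\<exists>F. length F = length Cs \<and> is_GC m v k F"
proof -
  define pad where "pad = (\<lambda>i B. SOME S. B \<inter> {0..<v i} \<subseteq> S \<and> S \<subseteq> {0..<v i} \<and> card S = k i)"
  define g where "g = (\<lambda>B i. if i < m then pad i B else {})"
  have padP: "B \<inter> {0..<v i} \<subseteq> pad i B \<and> pad i B \<subseteq> {0..<v i} \<and> card (pad i B) = k i"
    if "B \<in> set Cs" "i < m" for B i
  proof -
    have cB: "card B = K" "B \<subseteq> {0..<V}" using C that unfolding is_covering_def by auto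
    have "card (B \<inter> {0..<v i}) \<le> card B" using cB by (meson card_mono finite_atLeastLessThan finite_subset inf_le1)
    hence "card (B \<inter> {0..<v i}) \<le> k i" using cB le that by auto
    moreover have "k i \<le> card {0..<v i}" using le that by auto
    ultimately have "\<exists>S. B \<inter> {0..<v i} \<subseteq> S \<and> S \<subseteq> {0..<v i} \<and> card S = k i"
      using exists_subset_between[of "B \<inter> {0..<v i}" "k i" "{0..<v i}"] by auto
    then show ?thesis unfolding pad_def by (rule someI_ex)
  qed
  have "is_GC m v k (map g Cs)"
    unfolding is_GC_def
  proof (intro conjI allI impI ballI)
    fix B assume "B \<in> set (map g Cs)"
    then obtain B0 where "B0 \<in> set Cs" "B = g B0" by auto
    then show "is_block m v k B" using padP unfolding is_block_def g_def by auto
  next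
    fix T assume T: "admissible2 m v k T"
    have fin: "\<forall>i\<in>{..<m}. finite (T i)" using T unfolding admissible2_def
      by (meson finite_atLeastLessThan finite_subset lessThan_iff)
    have "card (SIGMA i:{..<m}. T i) = 2" using T fin unfolding admissible2_def by simp
    then obtain a b where ab: "(SIGMA i:{..<m}. T i) = {a,b}" "a \<noteq> b" by (auto simp: card_2_iff)
    obtain i x where a: "a = (i,x)" by force
    obtain l y where b: "b = (l,y)" by force
    have ix: "i < m" "x \<in> T i" "l < m" "y \<in> T l" using ab a b by blast+
    have xV: "x < V" "y < V" using ix T le unfolding admissible2_def by fastforce+
    define z where "z = (if x \<noteq> y then y else if x = 0 then 1 else 0)"
    have zV: "z < V" "x \<noteq> z" using xV K2 le ix unfolding z_def
      using C unfolding is_covering_def by auto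
    have "{x,z} \<subseteq> {0..<V} \<and> card {x,z} = 2" using zV xV by simp
    moreover have covP: "\<And>P. P \<subseteq> {0..<V} \<Longrightarrow> card P = 2 \<Longrightarrow> \<exists>B\<in>set Cs. P \<subseteq> B"
      using C unfolding is_covering_def by blast
    ultimately obtain B where B: "B \<in> set Cs" "{x,z} \<subseteq> B" by blast
    have xyB: "x \<in> B" "y \<in> B" using B unfolding z_def by (auto split: if_splits)
    have Ts: "T i \<subseteq> {0..<v i}" "T l \<subseteq> {0..<v l}" using ix T unfolding admissible2_def by auto
    have xv: "x < v i" "y < v l" using ix Ts by auto
    have "contained_in m T (g B)"
      unfolding contained_in_def
    proof (intro allI impI subsetI)
      fix i' w assume "i' < m" "w \<in> T i'"
      then have "(i',w) \<in> {a,b}" using ab(1) by blast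
      then have "(i' = i \<and> w = x) \<or> (i' = l \<and> w = y)" using a b by auto
      moreover have "x \<in> pad i B" using padP[OF B(1) ix(1)] xyB xv by auto
      moreover have "y \<in> pad l B" using padP[OF B(1) ix(3)] xyB xv by auto
      ultimately show "w \<in> g B i'" using ix unfolding g_def by auto
    qed
    then show "\<exists>B\<in>set (map g Cs). contained_in m T B" using B by auto
  qed
  then show ?thesis by (intro exI[of _ "map g Cs"]) simp
qed

lemma coverC:
  assumes "2 \<le> K" "K \<le> V"
  shows "\<exists>F. is_covering V K F"
proof -
  have "{B. B \<subseteq> {0..<V} \<and> card B = K} \<subseteq> Pow {0..<V}" by blast
  then have "finite {B. B \<subseteq> {0..<V} \<and> card B = K}"
    by (rule finite_subset) (rule finite_Pow_iff[THEN iffD2], rule finite_atLeastLessThan)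
  from finite_list[OF this] obtain xs where xs: "set xs = {B. B \<subseteq> {0..<V} \<and> card B = K}"
    by (elim exE)
  have c1: "\<forall>B\<in>set xs. B \<subseteq> {0..<V} \<and> card B = K" using xs by blast
  have c2: "\<exists>B\<in>set xs. P \<subseteq> B" if P: "P \<subseteq> {0..<V}" "card P = 2" for P
  proof -
    have "card P \<le> K" "K \<le> card {0..<V}" using P assms by auto
    then obtain B where "P \<subseteq> B" "B \<subseteq> {0..<V}" "card B = K"
      using exists_subset_between[of P K "{0..<V}"] P(1) by blast
    then show ?thesis using xs by blast
  qed
  have "is_covering V K xs"
    unfolding is_covering_def using c1 c2 by blast
  then show ?thesis by blast
qed

theorem corollary3p19:
  fixes m :: nat and v k :: "nat \<Rightarrow> nat" and j :: nat
  assumes "m \<ge> 1"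
    and "\<forall>i<m. 0 < k i \<and> k i \<le> v i"
    and "j < m"
    and "v j = Max (v ` {0..<m})"
    and "k j = Min (k ` {0..<m})"
    and "k j \<ge> 2"
  shows "GC_num m v k = cover_num (Max (v ` {0..<m})) (Min (k ` {0..<m}))"
proof -
  have le: "\<forall>i<m. k j \<le> k i \<and> k i \<le> v i \<and> v i \<le> v j"
    using assms(2,4,5) by auto
  obtain Cs where Cs: "is_covering (v j) (k j) Cs"
    using coverC[of "k j" "v j"] assms(2,3,6) by auto
  have cn: "cover_num (v j) (k j) \<le> length F" if "is_GC m v k F" for F
  proof -
    have "is_covering (v j) (k j) (map (\<lambda>B. B j) F)" using lowerA that assms(3,6) by blast
    then show ?thesis unfolding cover_num_def by (metis (mono_tags, lifting) Least_le length_map)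
  qed
  have ex1: "\<exists>n F. length F = n \<and> is_covering (v j) (k j) F" using Cs by blast
  obtain C0 where C0: "length C0 = cover_num (v j) (k j)" "is_covering (v j) (k j) C0"
    using LeastI_ex[OF ex1] unfolding cover_num_def by blast
  obtain F0 where F0: "length F0 = length C0" "is_GC m v k F0"
    using upperB[OF C0(2) assms(6) le] by blast
  have ex2: "\<exists>n F. length F = n \<and> is_GC m v k F" using F0 by blast
  obtain F1 where F1: "length F1 = GC_num m v k" "is_GC m v k F1"
    using LeastI_ex[OF ex2] unfolding GC_num_def by blast
  have "GC_num m v k \<le> length F0" unfolding GC_num_def using F0 by (metis (mono_tags, lifting) Least_le)
  moreover have "cover_num (v j) (k j) \<le> GC_num m v k" using cn[OF F1(2)] F1(1) by simp
  ultimately show ?thesis using C0 F0 assms(4,5) by simp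
qed

end
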